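(* Consider the discrete all-pay auction in the model without ties, with values drawn i.i.d. from a distribution with full support on $X$. There is at most one symmetric equilibrium bidding function: if $\beta$ and $\beta'$ are both SE bidding functions then $\beta=\beta'$.
   Context: Model. There are $n\ge 2$ risk-neutral bidders competing for one indivisible object. Normalise the grid so that values and bids lie in $X=\{0,1,2,\dots,x\}$ for some $x\in\mathbb N$. Each bidder $i$ privately learns a value $v_i\in X$; values are drawn independently from a common distribution in which every element of $X$ has strictly positive probability. Each bidder submits a bid $b_i\in X$. A (pure) strategy is a bidding function $\beta:X\to X$. In the model without ties, bidder $i$ wins iff $b_i>b_j$ for all $j\neq i$ (if the highest bid is tied, nobody wins). In the all-pay auction, a bidder with value $v_i$ bidding $b_i$ gets expected payoff $v_i\Pr(i\text{ wins})-b_i$ (everyone pays their bid). An equilibrium is a profile of bidding functions such that each bidder's bidding function maximises their expected payoff given the others' bidding functions (a pure-strategy Bayes–Nash equilibrium) and such that no bidder uses a weakly dominated bidding function (a bidding function is weakly dominated if some other bidding function yields at least as high expected payoff against every profile of opponents' bidding functions, and strictly higher against some). A symmetric equilibrium (SE) is an equilibrium in which all bidders use the same bidding function $\beta$. *)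

theory Defs
  imports Complex_Main "HOL-Library.FuncSet"
begin

text \<open>Grid X = {0..x}. Bidding functions are extensional maps X \<rightarrow> X.
  p v is the probability of value v. m = n - 1 is the number of opponents.\<close>

definition strategies :: "nat \<Rightarrow> (nat \<Rightarrow> nat) set" where
  "strategies x = {0..x} \<rightarrow>\<^sub>E {0..x}"

definition below_prob :: "nat \<Rightarrow> (nat \<Rightarrow> real) \<Rightarrow> (nat \<Rightarrow> nat) \<Rightarrow> nat \<Rightarrow> real" where
  "below_prob x p g b = (\<Sum>w\<in>{0..x}. if g w < b then p w else 0)"

text \<open>Winning probability with bid b against opponents 0..m-1 using sigma j
  (no ties: win iff strictly above all other bids; values independent).\<close>
definition win_prob :: "nat \<Rightarrow> (nat \<Rightarrow> real) \<Rightarrow> nat \<Rightarrow> (nat \<Rightarrow> nat \<Rightarrow> nat) \<Rightarrow> nat \<Rightarrow> real" where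
  "win_prob x p m \<sigma> b = (\<Prod>j<m. below_prob x p (\<sigma> j) b)"

definition payoff :: "nat \<Rightarrow> (nat \<Rightarrow> real) \<Rightarrow> nat \<Rightarrow> (nat \<Rightarrow> nat) \<Rightarrow> (nat \<Rightarrow> nat \<Rightarrow> nat) \<Rightarrow> real" where
  "payoff x p m g \<sigma> = (\<Sum>v\<in>{0..x}. p v * (real v * win_prob x p m \<sigma> (g v) - real (g v)))"

definition opp_profiles :: "nat \<Rightarrow> nat \<Rightarrow> (nat \<Rightarrow> nat \<Rightarrow> nat) set" where
  "opp_profiles x m = {\<sigma>. \<forall>j<m. \<sigma> j \<in> strategies x}"

definition weakly_dominated :: "nat \<Rightarrow> (nat \<Rightarrow> real) \<Rightarrow> nat \<Rightarrow> (nat \<Rightarrow> nat) \<Rightarrow> bool" where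
  "weakly_dominated x p m g \<longleftrightarrow>
     (\<exists>h\<in>strategies x.
        (\<forall>\<sigma>\<in>opp_profiles x m. payoff x p m h \<sigma> \<ge> payoff x p m g \<sigma>) \<and>
        (\<exists>\<sigma>\<in>opp_profiles x m. payoff x p m h \<sigma> > payoff x p m g \<sigma>))"

definition is_SE :: "nat \<Rightarrow> (nat \<Rightarrow> real) \<Rightarrow> nat \<Rightarrow> (nat \<Rightarrow> nat) \<Rightarrow> bool" where
  "is_SE x p n \<beta> \<longleftrightarrow>
     \<beta> \<in> strategies x \<and>
     (\<forall>g\<in>strategies x. payoff x p (n - 1) g (\<lambda>_. \<beta>) \<le> payoff x p (n - 1) \<beta> (\<lambda>_. \<beta>)) \<and>
     \<not> weakly_dominated x p (n - 1) \<beta>"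

end

theory Submission
  imports Defs
begin

lemma wp_eq: "win_prob x p m (\<lambda>_. \<beta>) c = (below_prob x p \<beta> c) ^ m"
  unfolding win_prob_def by simp

lemma bp_mono:
  assumes "\<forall>v\<in>{0..x}. p v > 0" "c \<le> d"
  shows "below_prob x p \<beta> c \<le> below_prob x p \<beta> d"
  unfolding below_prob_def
  using assms by (intro sum_mono) (auto simp: less_imp_le)

lemma bp_nonneg:
  assumes "\<forall>v\<in>{0..x}. p v > 0"
  shows "0 \<le> below_prob x p \<beta> c"
  unfolding below_prob_def using assms by (intro sum_nonneg) (auto simp: less_imp_le)

lemma BR:
  assumes pos: "\<forall>v\<in>{0..x}. p v > 0" and se: "is_SE x p n \<beta>"
    and v: "v \<in> {0..x}" and b: "b \<in> {0..x}"
  shows "real v * win_prob x p (n-1) (\<lambda>_. \<beta>) b - real b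
       \<le> real v * win_prob x p (n-1) (\<lambda>_. \<beta>) (\<beta> v) - real (\<beta> v)"
proof -
  let ?m = "n - 1"
  let ?s = "\<lambda>_::nat. \<beta>"
  define u where "u c = real v * win_prob x p ?m ?s c - real c" for c
  define g where "g = \<beta>(v := b)"
  have bs: "\<beta> \<in> strategies x" using se unfolding is_SE_def by auto
  have gs: "g \<in> strategies x"
    using bs b v unfolding g_def strategies_def
    by (metis PiE_fun_upd insert_absorb)
  have le: "payoff x p ?m g ?s \<le> payoff x p ?m \<beta> ?s"
    using se gs unfolding is_SE_def by auto
  define R where "R = (\<Sum>w\<in>{0..x}-{v}. p w * (real w * win_prob x p ?m ?s (\<beta> w) - real (\<beta> w)))"
  have "payoff x p ?m g ?s = p v * u b + (\<Sum>w\<in>{0..x}-{v}. p w * (real w * win_prob x p ?m ?s (g w) - real (g w)))"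
    unfolding payoff_def u_def using v by (simp add: sum.remove[of "{0..x}" v] g_def)
  also have "(\<Sum>w\<in>{0..x}-{v}. p w * (real w * win_prob x p ?m ?s (g w) - real (g w))) = R"
    unfolding R_def by (rule sum.cong) (auto simp: g_def)
  finally have e1: "payoff x p ?m g ?s = p v * u b + R" .
  have e2: "payoff x p ?m \<beta> ?s = p v * u (\<beta> v) + R"
    unfolding payoff_def u_def R_def using v by (simp add: sum.remove[of "{0..x}" v])
  have "p v * u b \<le> p v * u (\<beta> v)" using le e1 e2 by simp
  moreover have "p v > 0" using pos v by auto
  ultimately have "u b \<le> u (\<beta> v)" by simp
  thus ?thesis unfolding u_def .
qed

lemma strat_range:
  assumes "is_SE x p n \<beta>" "v \<in> {0..x}"
  shows "\<beta> v \<le> x"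
  using assms unfolding is_SE_def strategies_def by (auto simp: PiE_iff)

lemma SE_mono:
  assumes pos: "\<forall>v\<in>{0..x}. p v > 0" and se: "is_SE x p n \<beta>"
    and vv: "v < v'" "v' \<le> x"
  shows "\<beta> v \<le> \<beta> v'"
proof (rule ccontr)
  assume "\<not> ?thesis"
  hence lt: "\<beta> v' < \<beta> v" by simp
  let ?W = "\<lambda>c. win_prob x p (n-1) (\<lambda>_. \<beta>) c"
  have "?W (\<beta> v') \<le> ?W (\<beta> v)" unfolding wp_eq
    using lt by (intro power_mono bp_mono[OF pos] bp_nonneg[OF pos]) auto
  moreover have "real v * ?W (\<beta> v') - real (\<beta> v') \<le> real v * ?W (\<beta> v) - real (\<beta> v)"
    using BR[OF pos se, of v "\<beta> v'"] vv strat_range[OF se, of v'] by auto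
  moreover have "real v' * ?W (\<beta> v) - real (\<beta> v) \<le> real v' * ?W (\<beta> v') - real (\<beta> v')"
    using BR[OF pos se, of v' "\<beta> v"] vv strat_range[OF se, of v] by auto
  moreover have "real v < real v'" using vv by simp
  moreover have "real (\<beta> v') < real (\<beta> v)" using lt by simp
  ultimately have A: "?W (\<beta> v') \<le> ?W (\<beta> v)"
    and B: "real v * ?W (\<beta> v') - real (\<beta> v') \<le> real v * ?W (\<beta> v) - real (\<beta> v)"
    and C: "real v' * ?W (\<beta> v) - real (\<beta> v) \<le> real v' * ?W (\<beta> v') - real (\<beta> v')"
    and D: "real v < real v'" and E: "real (\<beta> v') < real (\<beta> v)" by auto
  have "(real v' - real v) * (?W (\<beta> v) - ?W (\<beta> v')) \<le> 0"
    using B C by (simp add: algebra_simps)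
  moreover have "(real v' - real v) * (?W (\<beta> v) - ?W (\<beta> v')) \<ge> 0"
    using A D by simp
  ultimately have "(real v' - real v) * (?W (\<beta> v) - ?W (\<beta> v')) = 0" by linarith
  hence "?W (\<beta> v) = ?W (\<beta> v')" using D by simp
  thus False using B E by simp
qed

lemma step:
  assumes n: "n \<ge> 2" and pos: "\<forall>v\<in>{0..x}. p v > 0"
    and se: "is_SE x p n \<beta>" and se': "is_SE x p n \<beta>'"
    and agree: "\<forall>w<v. \<beta> w = \<beta>' w" and vx: "v \<le> x"
    and lt: "\<beta> v < \<beta>' v"
  shows False
proof -
  define b where "b = \<beta> v"
  define b' where "b' = \<beta>' v"
  define m where "m = n - 1"
  have m: "0 < m" using n unfolding m_def by simp
  define G where "G = (\<Sum>w\<in>{0..x}. if w < v then p w else 0)"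
  have mono: "\<And>w. w \<in> {0..x} \<Longrightarrow> v \<le> w \<Longrightarrow> \<beta> v \<le> \<beta> w"
    using SE_mono[OF pos se] by (metis atLeastAtMost_iff le_eq_less_or_eq)
  have mono': "\<And>w. w \<in> {0..x} \<Longrightarrow> v \<le> w \<Longrightarrow> \<beta>' v \<le> \<beta>' w"
    using SE_mono[OF pos se'] by (metis atLeastAtMost_iff le_eq_less_or_eq)
  have monol: "\<And>w. w < v \<Longrightarrow> \<beta> w \<le> \<beta> v"
    using SE_mono[OF pos se] vx by auto
  have F1: "below_prob x p \<beta>' b = below_prob x p \<beta> b"
    unfolding below_prob_def
  proof (rule sum.cong)
    fix w assume w: "w \<in> {0..x}"
    show "(if \<beta>' w < b then p w else 0) = (if \<beta> w < b then p w else 0)"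
    proof (cases "w < v")
      case True thus ?thesis using agree by simp
    next
      case False
      thus ?thesis using mono[OF w] mono'[OF w] lt unfolding b_def by auto
    qed
  qed simp
  have F2: "below_prob x p \<beta>' b' = G"
    unfolding below_prob_def G_def
  proof (rule sum.cong)
    fix w assume w: "w \<in> {0..x}"
    show "(if \<beta>' w < b' then p w else 0) = (if w < v then p w else 0)"
    proof (cases "w < v")
      case True thus ?thesis using agree monol[OF True] lt unfolding b'_def by (metis le_less_trans)
    next
      case False
      thus ?thesis using mono'[OF w] unfolding b'_def by auto
    qed
  qed simp
  have G0: "0 \<le> G" unfolding G_def using pos by (intro sum_nonneg) (auto simp: less_imp_le)
  have "G + p v = (\<Sum>w\<in>{0..x}. (if w < v then p w else 0) + (if w = v then p w else 0))"
    unfolding G_def sum.distrib using vx by simp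
  also have "\<dots> \<le> below_prob x p \<beta> (b+1)"
    unfolding below_prob_def
  proof (rule sum_mono)
    fix w assume w: "w \<in> {0..x}"
    show "(if w < v then p w else 0) + (if w = v then p w else 0) \<le> (if \<beta> w < b + 1 then p w else 0)"
      using monol[of w] pos w unfolding b_def by (cases "w < v"; cases "w = v") (auto simp: less_imp_le)
  qed
  finally have F3: "G + p v \<le> below_prob x p \<beta> (b+1)" .
  have pv: "p v > 0" using pos vx by auto
  have "G ^ m < (G + p v) ^ m" using G0 pv m by (intro power_strict_mono) auto
  also have "\<dots> \<le> (below_prob x p \<beta> (b+1)) ^ m"
    using F3 G0 pv by (intro power_mono) auto
  finally have strict: "G ^ m < (below_prob x p \<beta> (b+1)) ^ m" .
  have b'x: "b' \<le> x" using strat_range[OF se', of v] vx unfolding b'_def by auto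
  have bx: "b \<le> x" using strat_range[OF se, of v] vx unfolding b_def by auto
  have i1: "real v * (below_prob x p \<beta>' b) ^ m - real b \<le> real v * (below_prob x p \<beta>' b') ^ m - real b'"
    using BR[OF pos se', of v b] vx bx unfolding wp_eq b'_def m_def by auto
  have i2: "real v * (below_prob x p \<beta> (b+1)) ^ m - real (b+1) \<le> real v * (below_prob x p \<beta> b) ^ m - real b"
    using BR[OF pos se, of v "b+1"] vx lt b'x unfolding wp_eq b_def b'_def m_def by auto
  have bb: "real b + 1 \<le> real b'" using lt unfolding b_def b'_def by simp
  have vpos: "real v > 0"
  proof (rule ccontr)
    assume "\<not> real v > 0" hence "real v = 0" by simp
    thus False using i1 bb by simp
  qed
  have "real v * G ^ m < real v * (below_prob x p \<beta> (b+1)) ^ m"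
    using strict vpos by simp
  thus False using i1 i2 bb F1 F2 by simp
qed

theorem lemma11:
  fixes x n :: nat and p :: "nat \<Rightarrow> real" and \<beta> \<beta>' :: "nat \<Rightarrow> nat"
  assumes "n \<ge> 2"
    and "\<forall>v\<in>{0..x}. p v > 0"
    and "(\<Sum>v\<in>{0..x}. p v) = 1"
    and "is_SE x p n \<beta>"
    and "is_SE x p n \<beta>'"
  shows "\<beta> = \<beta>'"
proof -
  have all: "\<forall>w<v. \<beta> w = \<beta>' w" if "v \<le> Suc x" for v
    using that
  proof (induction v)
    case 0 thus ?case by simp
  next
    case (Suc v)
    hence IH: "\<forall>w<v. \<beta> w = \<beta>' w" and vx: "v \<le> x" by auto
    have "\<beta> v = \<beta>' v"
      using step[OF assms(1,2,4,5) IH vx] step[OF assms(1,2,5,4) _ vx] IH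
      by (metis linorder_neqE_nat)
    thus ?case using IH less_Suc_eq by auto
  qed
  have ext: "\<beta> \<in> extensional {0..x}" "\<beta>' \<in> extensional {0..x}"
    using assms(4,5) unfolding is_SE_def strategies_def by (auto simp: PiE_def)
  show ?thesis
  proof
    fix w show "\<beta> w = \<beta>' w"
    proof (cases "w \<le> x")
      case True thus ?thesis using all[of "Suc x"] by auto
    next
      case False thus ?thesis using ext by (auto simp: extensional_def)
    qed
  qed
qed

end
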